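(* Let $\varphi:\mathbb{R}\to\overline{\mathbb{R}}$ be proper, lsc and convex. Then there exist a proper, lsc, convex, nondecreasing function $\varphi^\uparrow$ and a proper, lsc, convex, nonincreasing function $\varphi^\downarrow$ such that $\varphi=\varphi^\uparrow+\varphi^\downarrow$. In addition, if $\operatorname{int}(\operatorname{dom}\varphi)\neq\emptyset$, then $\partial\varphi(z)=\partial\varphi^\uparrow(z)+\partial\varphi^\downarrow(z)$ for every $z\in\operatorname{dom}\varphi$.
   Context: $\partial$ denotes the convex subdifferential; $\overline{\mathbb{R}}=\mathbb{R}\cup\{\pm\infty\}$. *)

theory Defs
  imports "HOL-Analysis.Analysis" "HOL-Library.Extended_Real"
begin

definition proper_fun :: "(real \<Rightarrow> ereal) \<Rightarrow> bool" where
  "proper_fun f \<longleftrightarrow> (\<forall>x. f x \<noteq> -\<infinity>) \<and> (\<exists>x. f x \<noteq> \<infinity>)"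

definition lsc_fun :: "(real \<Rightarrow> ereal) \<Rightarrow> bool" where
  "lsc_fun f \<longleftrightarrow> (\<forall>x. f x \<le> Liminf (at x) f)"

definition epigraph :: "(real \<Rightarrow> ereal) \<Rightarrow> (real \<times> real) set" where
  "epigraph f = {(x, r). f x \<le> ereal r}"

definition convex_fun :: "(real \<Rightarrow> ereal) \<Rightarrow> bool" where
  "convex_fun f \<longleftrightarrow> convex (epigraph f)"

definition edom :: "(real \<Rightarrow> ereal) \<Rightarrow> real set" where
  "edom f = {x. f x < \<infinity>}"

definition subdiff :: "(real \<Rightarrow> ereal) \<Rightarrow> real \<Rightarrow> real set" where
  "subdiff f z = {v. \<bar>f z\<bar> \<noteq> \<infinity> \<and> (\<forall>x. f z + ereal (v * (x - z)) \<le> f x)}"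

definition set_plus_real :: "real set \<Rightarrow> real set \<Rightarrow> real set" where
  "set_plus_real A B = {a + b | a b. a \<in> A \<and> b \<in> B}"

end

theory Submission
  imports Defs
begin

lemma lsc_open: "lsc_fun f \<longleftrightarrow> (\<forall>y. open {z. y < f z})"
proof
  assume L: "lsc_fun f"
  show "\<forall>y. open {z. y < f z}"
  proof (intro allI)
   fix y show "open {z. y < f z}"
   proof (rule Topological_Spaces.openI)
    fix x assume "x \<in> {z. y < f z}"
    hence "y < f x" by simp
    hence "eventually (\<lambda>z. y < f z) (at x)" using L unfolding lsc_fun_def le_Liminf_iff by blast
    then obtain S where "open S" "x \<in> S" "\<forall>z\<in>S. z \<noteq> x \<longrightarrow> y < f z"
      by (auto simp: eventually_at_topological)
    thus "\<exists>T. open T \<and> x \<in> T \<and> T \<subseteq> {z. y < f z}" using \<open>y < f x\<close> by (intro exI[of _ S]) auto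
  qed
  qed
next
  assume O: "\<forall>y. open {z. y < f z}"
  show "lsc_fun f" unfolding lsc_fun_def le_Liminf_iff
  proof (intro allI impI)
    fix x y assume "y < f x"
    thus "eventually (\<lambda>z. y < f z) (at x)" unfolding eventually_at_topological
      using O by (intro exI[of _ "{z. y < f z}"]) auto
  qed
qed

lemma lsc_closed: "lsc_fun f \<Longrightarrow> closed {z. f z \<le> t}"
proof -
  assume "lsc_fun f"
  hence "open {z. t < f z}" using lsc_open by blast
  moreover have "{z. f z \<le> t} = - {z. t < f z}" by auto
  ultimately show ?thesis by (simp add: closed_def)
qed

lemma lsc_min_compact:
  assumes "lsc_fun f" "compact K" "K \<noteq> {}"
  shows "\<exists>x\<in>K. \<forall>y\<in>K. f x \<le> f y"
proof -
  let ?F = "(\<lambda>w. {z. f z \<le> f w}) ` K"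
  have "K \<inter> \<Inter>?F \<noteq> {}"
  proof (rule compact_imp_fip[OF assms(2)])
    fix T assume "T \<in> ?F" thus "closed T" using lsc_closed[OF assms(1)] by auto
  next
    fix F' assume "finite F'" "F' \<subseteq> ?F"
    then obtain W where W: "W \<subseteq> K" "finite W" "F' = (\<lambda>w. {z. f z \<le> f w}) ` W"
      by (meson finite_subset_image)
    show "K \<inter> \<Inter>F' \<noteq> {}"
    proof (cases "W = {}")
      case True thus ?thesis using W assms(3) by auto
    next
      case False
      obtain w0 where "w0 \<in> W" "\<forall>w\<in>W. \<not> f w < f w0"
        using ex_min_if_finite[of "f ` W"] W(2) False by auto
      hence "w0 \<in> W" "\<forall>w\<in>W. f w0 \<le> f w" by (auto simp: not_less)
      thus ?thesis using W by auto
    qed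
  qed
  thus ?thesis by auto
qed

lemma convex_funD:
  assumes "convex_fun f" "f x \<noteq> \<infinity>" "f y \<noteq> \<infinity>" "0 \<le> u" "0 \<le> v" "u + v = 1"
    "\<forall>x. f x \<noteq> -\<infinity>"
  shows "f (u * x + v * y) \<le> ereal (u * real_of_ereal (f x) + v * real_of_ereal (f y))"
proof -
  have "(x, real_of_ereal (f x)) \<in> epigraph f" "(y, real_of_ereal (f y)) \<in> epigraph f"
    using assms by (auto simp: epigraph_def ereal_real)
  hence "u *\<^sub>R (x, real_of_ereal (f x)) + v *\<^sub>R (y, real_of_ereal (f y)) \<in> epigraph f"
    using assms(1,4,5,6) unfolding convex_fun_def by (meson convexD)
  thus ?thesis by (simp add: epigraph_def)
qed

lemma convex_funI:
  assumes "\<forall>x. f x \<noteq> -\<infinity>"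
    "\<And>x y u v. f x \<noteq> \<infinity> \<Longrightarrow> f y \<noteq> \<infinity> \<Longrightarrow> 0 \<le> u \<Longrightarrow> 0 \<le> v \<Longrightarrow> u + v = 1 \<Longrightarrow>
      f (u * x + v * y) \<le> ereal (u * real_of_ereal (f x) + v * real_of_ereal (f y))"
  shows "convex_fun f"
  unfolding convex_fun_def
proof (rule convexI)
  fix p q :: "real \<times> real" and u v :: real
  assume p: "p \<in> epigraph f" and q: "q \<in> epigraph f" and uv: "0 \<le> u" "0 \<le> v" "u + v = 1"
  obtain x r y s where pq: "p = (x, r)" "q = (y, s)" by fastforce
  have fx: "f x \<le> ereal r" "f y \<le> ereal s" using p q pq by (auto simp: epigraph_def)
  hence fin: "f x \<noteq> \<infinity>" "f y \<noteq> \<infinity>" by auto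
  have rx: "real_of_ereal (f x) \<le> r" "real_of_ereal (f y) \<le> s" using fx fin assms(1)
    by (cases "f x"; cases "f y"; auto)+
  have "f (u * x + v * y) \<le> ereal (u * real_of_ereal (f x) + v * real_of_ereal (f y))"
    using assms(2)[OF fin uv] .
  also have "\<dots> \<le> ereal (u * r + v * s)" using rx uv
    by (simp add: add_mono mult_left_mono)
  finally show "u *\<^sub>R p + v *\<^sub>R q \<in> epigraph f" using pq by (simp add: epigraph_def)
qed


lemma min_mono_right:
  assumes cf: "convex_fun f" and nm: "\<forall>x. f x \<noteq> -\<infinity>" and mn: "\<forall>x. f c \<le> f x"
    and cs: "c \<le> s" and st: "s \<le> t"
  shows "f s \<le> f t"
proof (cases "f t = \<infinity> \<or> s = t")
  case True thus ?thesis by auto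
next
  case False
  hence ft: "f t \<noteq> \<infinity>" and st': "s < t" using st by auto
  have fc: "f c \<noteq> \<infinity>" using mn[rule_format, of t] ft by auto
  obtain a b where ab: "f c = ereal a" "f t = ereal b" using fc ft nm
    by (cases "f c"; cases "f t") auto
  have ab': "a \<le> b" using mn[rule_format, of t] ab by simp
  define v where "v = (s - c) / (t - c)"
  define u where "u = (t - s) / (t - c)"
  have tc: "t - c > 0" using cs st' by simp
  have uv: "0 \<le> u" "0 \<le> v" "u + v = 1" "u * c + v * t = s"
    using cs st' tc unfolding u_def v_def by (auto simp: divide_simps) (simp add: algebra_simps)+
  have "f s = f (u * c + v * t)" using uv by simp
  also have "\<dots> \<le> ereal (u * real_of_ereal (f c) + v * real_of_ereal (f t))"
    using convex_funD[OF cf fc ft uv(1-3) nm] .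
  also have "\<dots> \<le> ereal (u * b + v * b)" using ab ab' uv by (simp add: mult_left_mono)
  also have "\<dots> = f t" using uv ab by (metis distrib_right mult_1)
  finally show ?thesis .
qed

lemma min_mono_left:
  assumes cf: "convex_fun f" and nm: "\<forall>x. f x \<noteq> -\<infinity>" and mn: "\<forall>x. f c \<le> f x"
    and st: "s \<le> t" and tc0: "t \<le> c"
  shows "f t \<le> f s"
proof (cases "f s = \<infinity> \<or> s = t")
  case True thus ?thesis by auto
next
  case False
  hence fs: "f s \<noteq> \<infinity>" and st': "s < t" using st by auto
  have fc: "f c \<noteq> \<infinity>" using mn[rule_format, of s] fs by auto
  obtain a b where ab: "f c = ereal a" "f s = ereal b" using fc fs nm
    by (cases "f c"; cases "f s") auto
  have ab': "a \<le> b" using mn[rule_format, of s] ab by simp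
  define u where "u = (c - t) / (c - s)"
  define v where "v = (t - s) / (c - s)"
  have tc: "c - s > 0" using tc0 st' by simp
  have uv: "0 \<le> u" "0 \<le> v" "u + v = 1" "u * s + v * c = t"
    using tc0 st' tc unfolding u_def v_def by (auto simp: divide_simps) (simp add: algebra_simps)+
  have "f t = f (u * s + v * c)" using uv by simp
  also have "\<dots> \<le> ereal (u * real_of_ereal (f s) + v * real_of_ereal (f c))"
    using convex_funD[OF cf fs fc uv(1-3) nm] .
  also have "\<dots> \<le> ereal (u * b + v * b)" using ab ab' uv by (simp add: mult_left_mono)
  also have "\<dots> = f s" using uv ab by (metis distrib_right mult_1)
  finally show ?thesis .
qed

lemma convex_max:
  assumes cf: "convex_fun f" and nm: "\<forall>x. f x \<noteq> -\<infinity>" and mn: "\<forall>x. f c \<le> f x"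
  shows "convex_fun (\<lambda>x. f (max x c))"
proof (rule convex_funI)
  show "\<forall>x. f (max x c) \<noteq> - \<infinity>" using nm by auto
next
  fix x y u v :: real
  assume fx: "f (max x c) \<noteq> \<infinity>" and fy: "f (max y c) \<noteq> \<infinity>" and uv: "0 \<le> u" "0 \<le> v" "u + v = 1"
  have le: "max (u * x + v * y) c \<le> u * max x c + v * max y c"
  proof -
    have "u * x + v * y \<le> u * max x c + v * max y c" using uv
      by (intro add_mono mult_left_mono) auto
    moreover have "c \<le> u * max x c + v * max y c"
    proof -
      have "c = u * c + v * c" using uv by (metis distrib_right mult_1)
      also have "\<dots> \<le> u * max x c + v * max y c" using uv by (intro add_mono mult_left_mono) auto
      finally show ?thesis .
    qed
    ultimately show ?thesis by simp
  qed
  have "f (max (u * x + v * y) c) \<le> f (u * max x c + v * max y c)"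
    using min_mono_right[OF cf nm mn _ le] by simp
  also have "\<dots> \<le> ereal (u * real_of_ereal (f (max x c)) + v * real_of_ereal (f (max y c)))"
    using convex_funD[OF cf fx fy uv nm] .
  finally show "f (max (u * x + v * y) c) \<le> ereal (u * real_of_ereal (f (max x c)) + v * real_of_ereal (f (max y c)))" .
qed

lemma convex_min:
  assumes cf: "convex_fun f" and nm: "\<forall>x. f x \<noteq> -\<infinity>" and mn: "\<forall>x. f c \<le> f x"
  shows "convex_fun (\<lambda>x. f (min x c))"
proof (rule convex_funI)
  show "\<forall>x. f (min x c) \<noteq> - \<infinity>" using nm by auto
next
  fix x y u v :: real
  assume fx: "f (min x c) \<noteq> \<infinity>" and fy: "f (min y c) \<noteq> \<infinity>" and uv: "0 \<le> u" "0 \<le> v" "u + v = 1"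
  have le: "u * min x c + v * min y c \<le> min (u * x + v * y) c"
  proof -
    have "u * min x c + v * min y c \<le> u * x + v * y" using uv
      by (intro add_mono mult_left_mono) auto
    moreover have "u * min x c + v * min y c \<le> c"
    proof -
      have "u * min x c + v * min y c \<le> u * c + v * c" using uv by (intro add_mono mult_left_mono) auto
      also have "\<dots> = c" using uv by (metis distrib_right mult_1)
      finally show ?thesis .
    qed
    ultimately show ?thesis by simp
  qed
  have "f (min (u * x + v * y) c) \<le> f (u * min x c + v * min y c)"
    using min_mono_left[OF cf nm mn le] by simp
  also have "\<dots> \<le> ereal (u * real_of_ereal (f (min x c)) + v * real_of_ereal (f (min y c)))"
    using convex_funD[OF cf fx fy uv nm] .
  finally show "f (min (u * x + v * y) c) \<le> ereal (u * real_of_ereal (f (min x c)) + v * real_of_ereal (f (min y c)))" .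
qed

lemma convex_minus_const:
  assumes cf: "convex_fun f" and nm: "\<forall>x. f x \<noteq> -\<infinity>"
  shows "convex_fun (\<lambda>x. f x - ereal m)"
proof (rule convex_funI)
  show "\<forall>x. f x - ereal m \<noteq> - \<infinity>"
  proof
    fix x show "f x - ereal m \<noteq> - \<infinity>" using nm[rule_format, of x] by (cases "f x") auto
  qed
next
  fix x y u v :: real
  assume fx: "f x - ereal m \<noteq> \<infinity>" and fy: "f y - ereal m \<noteq> \<infinity>" and uv: "0 \<le> u" "0 \<le> v" "u + v = 1"
  obtain a b where ab: "f x = ereal a" "f y = ereal b" using fx fy nm
    by (cases "f x"; cases "f y") auto
  have "f (u * x + v * y) \<le> ereal (u * a + v * b)"
    using convex_funD[OF cf _ _ uv nm, of x y] ab by simp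
  hence "f (u * x + v * y) - ereal m \<le> ereal (u * a + v * b - m)"
    using nm[rule_format, of "u * x + v * y"] by (cases "f (u * x + v * y)") auto
  also have "\<dots> = ereal (u * (a - m) + v * (b - m))"
  proof -
    have "u * (a - m) + v * (b - m) = u * a + v * b - (u + v) * m" by (simp add: algebra_simps)
    thus ?thesis using uv by simp
  qed
  finally show "f (u * x + v * y) - ereal m \<le> ereal (u * real_of_ereal (f x - ereal m) + v * real_of_ereal (f y - ereal m))"
    using ab by simp
qed


lemma lsc_max: "lsc_fun f \<Longrightarrow> lsc_fun (\<lambda>x. f (max x c))"
  unfolding lsc_open
proof
  fix y assume "\<forall>y. open {z. y < f z}"
  hence "open ((\<lambda>z. max z c) -` {z. y < f z})"
    by (intro continuous_open_vimage) (auto intro!: continuous_intros)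
  moreover have "(\<lambda>z. max z c) -` {z. y < f z} = {z. y < f (max z c)}" by auto
  ultimately show "open {z. y < f (max z c)}" by simp
qed

lemma lsc_min: "lsc_fun f \<Longrightarrow> lsc_fun (\<lambda>x. f (min x c))"
  unfolding lsc_open
proof
  fix y assume "\<forall>y. open {z. y < f z}"
  hence "open ((\<lambda>z. min z c) -` {z. y < f z})"
    by (intro continuous_open_vimage) (auto intro!: continuous_intros)
  moreover have "(\<lambda>z. min z c) -` {z. y < f z} = {z. y < f (min z c)}" by auto
  ultimately show "open {z. y < f (min z c)}" by simp
qed

lemma lsc_minus_const: "lsc_fun f \<Longrightarrow> lsc_fun (\<lambda>x. f x - ereal m)"
  unfolding lsc_open
proof
  fix y assume "\<forall>y. open {z. y < f z}"
  hence "open {z. y + ereal m < f z}" by blast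
  moreover have "{z. y + ereal m < f z} = {z. y < f z - ereal m}"
  proof -
    have "\<And>a. (y + ereal m < a) = (y < a - ereal m)" by (case_tac a; cases y) auto
    thus ?thesis by auto
  qed
  ultimately show "open {z. y < f z - ereal m}" by simp
qed

lemma lsc_const: "lsc_fun (\<lambda>x. k)"
  unfolding lsc_open
proof
  fix y show "open {z::real. y < k}" by (cases "y < k") auto
qed

lemma convex_const0: "convex_fun (\<lambda>x. 0)"
  by (rule convex_funI) auto

lemma slope_left:
  assumes cf: "convex_fun f" and nm: "\<forall>x. f x \<noteq> -\<infinity>"
    and za: "z < a" and ab: "a < b" and fba: "f b < f a"
  shows "f a \<le> f z"
proof (cases "f z = \<infinity>")
  case True thus ?thesis by simp
next
  case False
  have fb: "f b \<noteq> \<infinity>" using fba by auto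
  obtain zz bb where zb: "f z = ereal zz" "f b = ereal bb" using False fb nm
    by (cases "f z"; cases "f b") auto
  define u where "u = (b - a) / (b - z)"
  define v where "v = (a - z) / (b - z)"
  have bz: "b - z > 0" using za ab by simp
  have uv: "0 < u" "0 \<le> v" "u + v = 1" "u * z + v * b = a"
    using za ab bz unfolding u_def v_def by (auto simp: divide_simps) (simp add: algebra_simps)+
  have "f a = f (u * z + v * b)" using uv by simp
  also have "\<dots> \<le> ereal (u * zz + v * bb)"
    using convex_funD[OF cf False fb _ uv(2,3) nm] uv(1) zb by simp
  finally have fa: "f a \<le> ereal (u * zz + v * bb)" .
  then obtain aa where aa: "f a = ereal aa" using nm by (cases "f a") auto
  have "aa \<le> u * zz + v * bb" "bb < aa" using fa fba aa zb by auto
  show ?thesis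
  proof (rule ccontr)
    assume "\<not> f a \<le> f z"
    hence "zz < aa" using aa zb by simp
    hence "u * zz + v * bb < u * aa + v * aa" using uv \<open>bb < aa\<close>
      by (intro add_less_le_mono mult_strict_left_mono mult_left_mono) auto
    also have "\<dots> = aa" using uv by (metis distrib_right mult_1)
    finally show False using \<open>aa \<le> u * zz + v * bb\<close> by simp
  qed
qed

lemma slope_right:
  assumes cf: "convex_fun f" and nm: "\<forall>x. f x \<noteq> -\<infinity>"
    and pq: "p < q" and qz: "q < z" and fpq: "f p < f q"
  shows "f q \<le> f z"
proof (cases "f z = \<infinity>")
  case True thus ?thesis by simp
next
  case False
  have fp: "f p \<noteq> \<infinity>" using fpq by auto
  obtain zz pp where zp: "f z = ereal zz" "f p = ereal pp" using False fp nm
    by (cases "f z"; cases "f p") auto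
  define u where "u = (z - q) / (z - p)"
  define v where "v = (q - p) / (z - p)"
  have zp0: "z - p > 0" using pq qz by simp
  have uv: "0 \<le> u" "0 < v" "u + v = 1" "u * p + v * z = q"
    using pq qz zp0 unfolding u_def v_def by (auto simp: divide_simps) (simp add: algebra_simps)+
  have "f q = f (u * p + v * z)" using uv by simp
  also have "\<dots> \<le> ereal (u * pp + v * zz)"
    using convex_funD[OF cf fp False uv(1) _ uv(3) nm] uv(2) zp by simp
  finally have fq: "f q \<le> ereal (u * pp + v * zz)" .
  then obtain qq where qq: "f q = ereal qq" using nm by (cases "f q") auto
  have "qq \<le> u * pp + v * zz" "pp < qq" using fq fpq qq zp by auto
  show ?thesis
  proof (rule ccontr)
    assume "\<not> f q \<le> f z"
    hence "zz < qq" using qq zp by simp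
    hence "u * pp + v * zz < u * qq + v * qq" using uv \<open>pp < qq\<close>
      by (intro add_le_less_mono mult_strict_left_mono mult_left_mono) auto
    also have "\<dots> = qq" using uv by (metis distrib_right mult_1)
    finally show False using \<open>qq \<le> u * pp + v * zz\<close> by simp
  qed
qed

lemma min_or_mono:
  assumes pf: "proper_fun f" and lf: "lsc_fun f" and cf: "convex_fun f"
  shows "(\<exists>c. \<forall>x. f c \<le> f x) \<or> mono f \<or> antimono f"
proof (rule ccontr)
  assume H: "\<not> ?thesis"
  have nm: "\<forall>x. f x \<noteq> -\<infinity>" using pf by (simp add: proper_fun_def)
  from H obtain a b where ab: "a \<le> b" "\<not> f a \<le> f b" unfolding mono_def by auto
  from H obtain p q where pq: "p \<le> q" "\<not> f q \<le> f p" unfolding antimono_def by auto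
  have ab': "a < b" "f b < f a" using ab by (auto simp: not_le order.order_iff_strict)
  have pq': "p < q" "f p < f q" using pq by (auto simp: not_le order.order_iff_strict)
  have L: "f a \<le> f z" if "z \<le> a" for z
    using slope_left[OF cf nm _ ab'(1) ab'(2), of z] that by (cases "z = a") auto
  have R: "f q \<le> f z" if "q \<le> z" for z
    using slope_right[OF cf nm pq'(1) _ pq'(2), of z] that by (cases "z = q") auto
  define K where "K = {min a p .. max b q}"
  have "compact K" "K \<noteq> {}" using ab' pq' by (auto simp: K_def)
  then obtain x where x: "x \<in> K" "\<forall>y\<in>K. f x \<le> f y" using lsc_min_compact[OF lf] by blast
  have "\<forall>z. f x \<le> f z"
  proof
    fix z
    show "f x \<le> f z"
    proof (cases "z \<in> K")
      case True thus ?thesis using x by auto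
    next
      case False
      hence "z < min a p \<or> z > max b q" by (auto simp: K_def)
      moreover have "a \<in> K" "q \<in> K" using ab' pq' by (auto simp: K_def)
      ultimately show ?thesis using x L R by (meson dual_order.trans less_imp_le max.strict_boundedE min.strict_boundedE)
    qed
  qed
  thus False using H by auto
qed


lemma subdiff_plus_sub:
  assumes sum: "\<forall>x. f x = g x + h x"
  shows "set_plus_real (subdiff g z) (subdiff h z) \<subseteq> subdiff f z"
proof
  fix w assume "w \<in> set_plus_real (subdiff g z) (subdiff h z)"
  then obtain a b where w: "w = a + b" and a: "a \<in> subdiff g z" and b: "b \<in> subdiff h z"
    by (auto simp: set_plus_real_def)
  obtain gz hz where gh: "g z = ereal gz" "h z = ereal hz" using a b
    by (cases "g z"; cases "h z") (auto simp: subdiff_def)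
  have Ha: "\<And>x. ereal (gz + a * (x - z)) \<le> g x" using a gh by (auto simp: subdiff_def)
  have Hb: "\<And>x. ereal (hz + b * (x - z)) \<le> h x" using b gh by (auto simp: subdiff_def)
  have "\<And>x. f z + ereal (w * (x - z)) \<le> f x"
  proof -
    fix x
    have "f z + ereal (w * (x - z)) = ereal (gz + a * (x - z)) + ereal (hz + b * (x - z))"
      using sum gh w by (simp add: algebra_simps)
    also have "\<dots> \<le> g x + h x" using Ha Hb by (rule add_mono)
    finally show "f z + ereal (w * (x - z)) \<le> f x" using sum by simp
  qed
  moreover have "\<bar>f z\<bar> \<noteq> \<infinity>" using sum gh by simp
  ultimately show "w \<in> subdiff f z" by (simp add: subdiff_def)
qed

lemma subdiff_zero: "subdiff (\<lambda>x. 0) z = {0}"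
proof -
  have "v = 0" if H: "\<forall>x. ereal (v * (x - z)) \<le> 0" for v
  proof -
    have "v * ((z + 1) - z) \<le> 0" "v * ((z - 1) - z) \<le> 0" using H[rule_format, of "z+1"] H[rule_format, of "z-1"]
      by (simp_all add: zero_ereal_def)
    thus ?thesis by simp
  qed
  thus ?thesis by (auto simp: subdiff_def zero_ereal_def)
qed

lemma set_plus_zero_right: "set_plus_real A {0} = A"
  by (auto simp: set_plus_real_def)
lemma set_plus_zero_left: "set_plus_real {0} A = A"
  by (auto simp: set_plus_real_def)

locale minset =
  fixes f :: "real \<Rightarrow> ereal" and c m :: real
  assumes nm: "\<forall>x. f x \<noteq> -\<infinity>" and mn: "\<forall>x. f c \<le> f x" and fc: "f c = ereal m"
begin

lemma sub_sign_pos: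
  assumes v: "v \<in> subdiff f z" and cz: "c < z"
  shows "0 \<le> v"
proof -
  obtain fz where fz: "f z = ereal fz" using v by (cases "f z") (auto simp: subdiff_def)
  have "f z + ereal (v * (c - z)) \<le> f c" using v by (auto simp: subdiff_def)
  hence "fz + v * (c - z) \<le> m" using fz fc by simp
  moreover have "m \<le> fz" using mn[rule_format, of z] fz fc by simp
  ultimately have "v * (c - z) \<le> 0" by simp
  thus ?thesis using cz by (simp add: mult_le_0_iff)
qed

lemma sub_sign_neg:
  assumes v: "v \<in> subdiff f z" and cz: "z < c"
  shows "v \<le> 0"
proof -
  obtain fz where fz: "f z = ereal fz" using v by (cases "f z") (auto simp: subdiff_def)
  have "f z + ereal (v * (c - z)) \<le> f c" using v by (auto simp: subdiff_def)
  hence "fz + v * (c - z) \<le> m" using fz fc by simp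
  moreover have "m \<le> fz" using mn[rule_format, of z] fz fc by simp
  ultimately have "v * (c - z) \<le> 0" by simp
  thus ?thesis using cz by (simp add: mult_le_0_iff)
qed

lemma sub_up:
  assumes v: "v \<in> subdiff f z" and cz: "c \<le> z" and v0: "0 \<le> v"
  shows "v \<in> subdiff (\<lambda>x. f (max x c) - ereal m) z"
proof -
  obtain fz where fz: "f z = ereal fz" using v by (cases "f z") (auto simp: subdiff_def)
  have H: "\<And>x. ereal (fz + v * (x - z)) \<le> f x" using v fz by (auto simp: subdiff_def)
  have Hc: "fz + v * (c - z) \<le> m" using H[of c] fc by simp
  have "ereal (fz - m) + ereal (v * (x - z)) \<le> f (max x c) - ereal m" for x
  proof (cases "c \<le> x")
    case True
    have "ereal (fz + v * (x - z)) \<le> f x" by (rule H)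
    thus ?thesis using True nm[rule_format, of x] by (cases "f x") auto
  next
    case False
    have "v * (x - z) \<le> v * (c - z)" using False v0 by (intro mult_left_mono) auto
    thus ?thesis using False fc Hc by simp
  qed
  moreover have "f (max z c) - ereal m = ereal (fz - m)" using cz fz by simp
  ultimately show ?thesis by (simp add: subdiff_def)
qed

lemma sub_down_zero:
  assumes cz: "c \<le> z"
  shows "0 \<in> subdiff (\<lambda>x. f (min x c)) z"
  using cz fc mn by (auto simp: subdiff_def)

lemma sub_down:
  assumes v: "v \<in> subdiff f z" and cz: "z \<le> c" and v0: "v \<le> 0"
  shows "v \<in> subdiff (\<lambda>x. f (min x c)) z"
proof -
  obtain fz where fz: "f z = ereal fz" using v by (cases "f z") (auto simp: subdiff_def)
  have H: "\<And>x. ereal (fz + v * (x - z)) \<le> f x" using v fz by (auto simp: subdiff_def)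
  have Hc: "fz + v * (c - z) \<le> m" using H[of c] fc by simp
  have "ereal fz + ereal (v * (x - z)) \<le> f (min x c)" for x
  proof (cases "x \<le> c")
    case True
    thus ?thesis using H[of x] by simp
  next
    case False
    have "v * (x - z) \<le> v * (c - z)" using False v0 by (intro mult_left_mono_neg) auto
    thus ?thesis using False fc Hc by simp
  qed
  moreover have "f (min z c) = ereal fz" using cz fz by simp
  ultimately show ?thesis by (simp add: subdiff_def)
qed

lemma sub_up_zero:
  assumes cz: "z \<le> c"
  shows "0 \<in> subdiff (\<lambda>x. f (max x c) - ereal m) z"
proof -
  have "ereal 0 \<le> f (max x c) - ereal m" for x
    using mn[rule_format, of "max x c"] fc nm[rule_format, of "max x c"] by (cases "f (max x c)") auto
  thus ?thesis using cz fc by (auto simp: subdiff_def)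
qed

end


theorem lemma3p1:
  fixes \<phi> :: "real \<Rightarrow> ereal"
  assumes "proper_fun \<phi>" and "lsc_fun \<phi>" and "convex_fun \<phi>"
  shows "\<exists>\<phi>u \<phi>d :: real \<Rightarrow> ereal.
           proper_fun \<phi>u \<and> lsc_fun \<phi>u \<and> convex_fun \<phi>u \<and> mono \<phi>u \<and>
           proper_fun \<phi>d \<and> lsc_fun \<phi>d \<and> convex_fun \<phi>d \<and> antimono \<phi>d \<and>
           (\<forall>x. \<phi> x = \<phi>u x + \<phi>d x) \<and>
           (interior (edom \<phi>) \<noteq> {} \<longrightarrow>
              (\<forall>z \<in> edom \<phi>. subdiff \<phi> z = set_plus_real (subdiff \<phi>u z) (subdiff \<phi>d z)))"
proof -
  have nm: "\<forall>x. \<phi> x \<noteq> -\<infinity>" using assms(1) by (simp add: proper_fun_def)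
  have p0: "proper_fun (\<lambda>x. 0)" by (simp add: proper_fun_def)
  have m0: "mono (\<lambda>x::real. 0::ereal)" "antimono (\<lambda>x::real. 0::ereal)" by (auto simp: mono_def antimono_def)
  consider (mi) c where "\<forall>x. \<phi> c \<le> \<phi> x" | (up) "mono \<phi>" | (down) "antimono \<phi>"
    using min_or_mono[OF assms] by blast
  thus ?thesis
  proof cases
    case up
    show ?thesis
      by (intro exI[of _ \<phi>] exI[of _ "\<lambda>x. 0"])
        (simp add: assms up p0 m0 lsc_const convex_const0 subdiff_zero set_plus_zero_right)
  next
    case down
    show ?thesis
      by (intro exI[of _ "\<lambda>x. 0"] exI[of _ \<phi>])
        (simp add: assms down p0 m0 lsc_const convex_const0 subdiff_zero set_plus_zero_left)
  next
    case mi
    obtain x0 where x0: "\<phi> x0 \<noteq> \<infinity>" using assms(1) by (auto simp: proper_fun_def)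
    have "\<phi> c \<noteq> \<infinity>" using mi x0 by (metis ereal_infty_less_eq(1))
    then obtain m where fc: "\<phi> c = ereal m" using nm by (cases "\<phi> c") auto
    interpret minset \<phi> c m using nm mi fc by unfold_locales auto
    define fu where "fu = (\<lambda>x. \<phi> (max x c) - ereal m)"
    define fd where "fd = (\<lambda>x. \<phi> (min x c))"
    have nmu: "\<forall>x. fu x \<noteq> -\<infinity>"
    proof
      fix x show "fu x \<noteq> -\<infinity>" unfolding fu_def using nm[rule_format, of "max x c"]
        by (cases "\<phi> (max x c)") auto
    qed
    have pu: "proper_fun fu" using nmu fc by (auto simp: proper_fun_def fu_def intro!: exI[of _ c])
    have pd: "proper_fun fd" using nm fc by (auto simp: proper_fun_def fd_def intro!: exI[of _ c])
    have lu: "lsc_fun fu" unfolding fu_def by (intro lsc_minus_const lsc_max assms)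
    have ld: "lsc_fun fd" unfolding fd_def by (intro lsc_min assms)
    have cu: "convex_fun fu" unfolding fu_def
      by (rule convex_minus_const[OF convex_max[OF assms(3) nm mi]]) (use nm in auto)
    have cd: "convex_fun fd" unfolding fd_def by (rule convex_min[OF assms(3) nm mi])
    have mu: "mono fu" unfolding mono_def fu_def
    proof (intro allI impI)
      fix x y :: real assume "x \<le> y"
      hence "\<phi> (max x c) \<le> \<phi> (max y c)" by (intro min_mono_right[OF assms(3) nm mi]) auto
      thus "\<phi> (max x c) - ereal m \<le> \<phi> (max y c) - ereal m" by (simp add: ereal_minus_mono)
    qed
    have md: "antimono fd" unfolding antimono_def fd_def
    proof (intro allI impI)
      fix x y :: real assume "x \<le> y"
      thus "\<phi> (min y c) \<le> \<phi> (min x c)" by (intro min_mono_left[OF assms(3) nm mi]) auto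
    qed
    have sm: "\<forall>x. \<phi> x = fu x + fd x"
    proof
      fix x show "\<phi> x = fu x + fd x"
      proof (cases "x \<le> c")
        case True thus ?thesis using fc by (simp add: fu_def fd_def)
      next
        case False thus ?thesis using fc nm[rule_format, of x] by (cases "\<phi> x") (auto simp: fu_def fd_def)
      qed
    qed
    have sd: "subdiff \<phi> z = set_plus_real (subdiff fu z) (subdiff fd z)" for z
    proof
      show "set_plus_real (subdiff fu z) (subdiff fd z) \<subseteq> subdiff \<phi> z"
        by (rule subdiff_plus_sub[OF sm])
    next
      show "subdiff \<phi> z \<subseteq> set_plus_real (subdiff fu z) (subdiff fd z)"
      proof
        fix v assume v: "v \<in> subdiff \<phi> z"
        show "v \<in> set_plus_real (subdiff fu z) (subdiff fd z)"
        proof (cases "c \<le> z \<and> 0 \<le> v")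
          case True
          have "v \<in> subdiff fu z" "0 \<in> subdiff fd z"
            using sub_up[OF v] sub_down_zero True unfolding fu_def fd_def by auto
          thus ?thesis unfolding set_plus_real_def by force
        next
          case False
          have "z \<le> c \<and> v \<le> 0" using False sub_sign_pos[OF v] sub_sign_neg[OF v] by force
          hence "0 \<in> subdiff fu z" "v \<in> subdiff fd z"
            using sub_up_zero sub_down[OF v] unfolding fu_def fd_def by auto
          thus ?thesis unfolding set_plus_real_def by force
        qed
      qed
    qed
    show ?thesis
      by (intro exI[of _ fu] exI[of _ fd]) (simp add: pu pd lu ld cu cd mu md sm sd)
  qed
qed

end
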